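(* Let $r\ge1$ be an integer and $N(u)=(1-u^{-1})(1-u^{-2})\cdots(1-u^{-r})$. Then (a) $\zeta_N(s)=\zeta_{\operatorname{GL}(r)/\mathbb F_1}(s+r^2)$; (b) $\zeta_{N^*}(s)=\zeta_{\operatorname{GL}(r)/\mathbb F_1}\big(s+\tfrac{r(r-1)}2\big)^{(-1)^r}$; (c) $\zeta_{\operatorname{GL}(r)/\mathbb F_1}\big(\tfrac{r(3r-1)}2-s\big)=\zeta_{\operatorname{GL}(r)/\mathbb F_1}(s)^{(-1)^r}$.
   Context: For measurable $N:(1,\infty)\to\mathbb C$ let $Z_N(w,s)=\frac1{\Gamma(w)}\int_1^\infty\frac{N(u)}{u^{s+1}}(\log u)^{w-1}du$ (convergent for $\operatorname{Re}(s)$ large and $w$ in an open domain, extended holomorphically to $w=0$), and $\zeta_N(s)=\exp\big(\frac{\partial}{\partial w}Z_N(w,s)\big|_{w=0}\big)$, continued meromorphically in $s$; $N^*(u)=N(1/u)$. $\zeta_{\operatorname{GL}(r)/\mathbb F_1}$ is the Soulé zeta function of the counting polynomial $N_{\operatorname{GL}(r)}(q)=\#\operatorname{GL}_r(\mathbb F_q)=q^{r^2}\prod_{k=1}^r(1-q^{-k})=\sum_k a_kq^k$, i.e. $\zeta_{\operatorname{GL}(r)/\mathbb F_1}(s)=\prod_k(s-k)^{-a_k}$. *)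

theory Defs
  imports "HOL-Analysis.Analysis" "HOL-Computational_Algebra.Polynomial"
begin

definition Z_integrand :: "(real \<Rightarrow> complex) \<Rightarrow> complex \<Rightarrow> complex \<Rightarrow> real \<Rightarrow> complex" where
  "Z_integrand N w s u =
     N u / (complex_of_real u powr (s + 1)) * (complex_of_real (ln u)) powr (w - 1)"

definition Z_convergent :: "(real \<Rightarrow> complex) \<Rightarrow> complex \<Rightarrow> complex \<Rightarrow> bool" where
  "Z_convergent N w s \<longleftrightarrow> set_integrable lborel {1<..} (Z_integrand N w s)"

definition Z_N :: "(real \<Rightarrow> complex) \<Rightarrow> complex \<Rightarrow> complex \<Rightarrow> complex" where
  "Z_N N w s = (LINT u : {1<..} | lborel. Z_integrand N w s u) / Gamma w"

definition Z_extension ::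
  "(real \<Rightarrow> complex) \<Rightarrow> complex \<Rightarrow> (complex \<Rightarrow> complex) \<Rightarrow> complex set \<Rightarrow> bool" where
  "Z_extension N s F D \<longleftrightarrow>
     open D \<and> connected D \<and> 0 \<in> D \<and> {w. Re w > 0} \<subseteq> D \<and> F holomorphic_on D \<and>
     (\<forall>w. Re w > 0 \<longrightarrow> Z_convergent N w s \<and> F w = Z_N N w s)"

definition has_Z_extension :: "(real \<Rightarrow> complex) \<Rightarrow> complex \<Rightarrow> bool" where
  "has_Z_extension N s \<longleftrightarrow> (\<exists>F D. Z_extension N s F D)"

definition zeta_N :: "(real \<Rightarrow> complex) \<Rightarrow> complex \<Rightarrow> complex" where
  "zeta_N N s = exp (deriv (SOME F. \<exists>D. Z_extension N s F D) 0)"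

text \<open>Counting polynomial #GL_r(F_q) = q^(r^2) prod_{k=1..r} (1 - q^(-k))
  = q^(r(r-1)/2) prod_{k=1..r} (q^k - 1).\<close>
definition N_GL :: "nat \<Rightarrow> int poly" where
  "N_GL r = monom 1 (r * (r - 1) div 2) * (\<Prod>k\<in>{1..r}. monom 1 k - 1)"

definition zeta_GL :: "nat \<Rightarrow> complex \<Rightarrow> complex" where
  "zeta_GL r s = (\<Prod>k\<in>{0..degree (N_GL r)}. (s - of_nat k) powi (- coeff (N_GL r) k))"

end

theory Submission
  imports Defs "HOL-Complex_Analysis.Complex_Analysis"
begin

definition P :: "complex \<Rightarrow> complex \<Rightarrow> real \<Rightarrow> complex" where
  "P z w u = of_real u powr (-z-1) * of_real (ln u) powr (w-1)"

lemma powr_of_real_pos: "a > 0 \<Longrightarrow> complex_of_real a powr b = exp (b * of_real (ln a))"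
  by (simp add: powr_def Ln_of_real)

lemma Gamma_lborel:
  assumes "Re w > 0"
  shows "set_integrable lborel {0<..} (\<lambda>t. complex_of_real t powr (w - 1) / of_real (exp t))"
proof -
  have "set_integrable lebesgue {0<..} (\<lambda>t. complex_of_real t powr (w - 1) / of_real (exp t))"
    using absolutely_integrable_Gamma_integral'[OF assms] .
  then show ?thesis unfolding set_integrable_def
    by (subst (asm) integrable_completion) measurable
qed

lemma h_eq:
  fixes x t :: real
  assumes "x > 0" "t > 0"
  shows "(exp (t/x) / x) *\<^sub>R P (of_real x) w (exp (t/x)) =
     of_real x powr (-w) * (complex_of_real t powr (w - 1) / of_real (exp t))"
proof -
  have p1: "complex_of_real (exp (t/x)) powr (-of_real x-1) = exp ((-of_real x-1) * of_real (t/x))"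
    by (subst powr_of_real_pos) auto
  have p2: "complex_of_real (ln (exp (t/x))) powr (w-1) = exp ((w-1) * (of_real (ln t) - of_real (ln x)))"
    using assms by (subst powr_of_real_pos) (auto simp: ln_div)
  have p3: "complex_of_real (exp (t/x) / x) = exp (of_real (t/x) - of_real (ln x))"
    using assms by (subst of_real_diff[symmetric], subst exp_of_real, simp add: exp_diff)
  have "(exp (t/x) / x) *\<^sub>R P (of_real x) w (exp (t/x)) =
     exp (of_real (t/x) - of_real (ln x)) * exp ((-of_real x-1) * of_real (t/x)) * exp ((w-1) * (of_real (ln t) - of_real (ln x)))"
    unfolding P_def scaleR_conv_of_real p1 p2 p3 by simp
  also have "\<dots> = exp (of_real (t/x) - of_real (ln x) + (-of_real x-1) * of_real (t/x) + (w-1) * (of_real (ln t) - of_real (ln x)))"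
    by (simp add: exp_add)
  also have "\<dots> = exp (-w * of_real (ln x) + ((w-1) * of_real (ln t) - of_real t))"
    using assms by (intro arg_cong[where f=exp]) (simp add: field_simps)
  also have "\<dots> = of_real x powr (-w) * (complex_of_real t powr (w - 1) / of_real (exp t))"
    using assms by (simp add: powr_of_real_pos exp_add exp_diff exp_minus field_simps) (metis exp_of_real)
  finally show ?thesis .
qed

lemma isCont_P: "u > 1 \<Longrightarrow> isCont (P z w) u"
  unfolding P_def by (auto intro!: continuous_intros simp: complex_nonpos_Reals_iff)

lemma P_measurable [measurable]: "P z w \<in> borel_measurable borel"
  unfolding P_def by measurable

lemma norm_P: "u > 1 \<Longrightarrow> norm (P z w u) = u powr (-Re z - 1) * ln u powr (Re w - 1)"
  unfolding P_def by (simp add: norm_mult norm_powr_real_powr)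

lemma einterval_0_inf: "einterval 0 \<infinity> = {0<..}"
  by (auto simp: einterval_def zero_ereal_def)
lemma einterval_1_inf: "einterval 1 \<infinity> = {1<..}"
  by (auto simp: einterval_def one_ereal_def)

lemma P_real_integral:
  fixes x :: real assumes x: "x > 0" and w: "Re w > 0"
  shows "set_integrable lborel {1<..} (P (of_real x) w)"
        "(LINT u:{1<..}|lborel. P (of_real x) w u) = Gamma w * of_real x powr (-w)"
proof -
  define g where "g t = exp (t/x)" for t
  define g' where "g' t = exp (t/x) / x" for t
  have deriv: "DERIV g t :> g' t" for t
    unfolding g_def g'_def using x by (auto intro!: derivative_eq_intros simp: field_simps)
  have contg': "isCont g' t" for t unfolding g'_def using x by (auto intro!: continuous_intros)
  have g'_nonneg: "0 \<le> g' t" for t unfolding g'_def using x by auto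
  have g_gt: "t > 0 \<Longrightarrow> g t > 1" for t unfolding g_def using x by auto
  have A: "((ereal \<circ> g \<circ> real_of_ereal) \<longlongrightarrow> 1) (at_right 0)"
    unfolding zero_ereal_def one_ereal_def ereal_tendsto_simps g_def using x
    by (auto intro!: tendsto_eq_intros)
  have B: "((ereal \<circ> g \<circ> real_of_ereal) \<longlongrightarrow> \<infinity>) (at_left \<infinity>)"
  proof -
    have lim: "LIM t at_top. t * (1/x) :> at_top"
      by (rule filterlim_at_top_mult_tendsto_pos[OF tendsto_const]) (use x in \<open>auto simp: filterlim_ident\<close>)
    show ?thesis unfolding ereal_tendsto_simps g_def
      by (rule filterlim_compose[OF exp_at_top]) (use lim in simp)
  qed
  have eqh: "g' t *\<^sub>R P (of_real x) w (g t) = of_real x powr (-w) * (complex_of_real t powr (w - 1) / of_real (exp t))"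
    if "t > 0" for t
    using h_eq[OF x that] unfolding g_def g'_def .
  have hint: "set_integrable lborel (einterval 0 \<infinity>) (\<lambda>t. g' t *\<^sub>R P (of_real x) w (g t))"
  proof -
    have "set_integrable lborel {0<..} (\<lambda>t. of_real x powr (-w) * (complex_of_real t powr (w - 1) / of_real (exp t)))"
      by (rule set_integrable_mult_right) (rule Gamma_lborel[OF w])
    then show ?thesis unfolding einterval_0_inf
      by (subst set_integrable_cong[OF refl refl eqh]) auto
  qed
  have hval: "(LBINT t=0..\<infinity>. g' t *\<^sub>R P (of_real x) w (g t)) = of_real x powr (-w) * Gamma w"
  proof -
    have "(LBINT t=0..\<infinity>. g' t *\<^sub>R P (of_real x) w (g t)) =
       (LINT t:{0<..}|lborel. of_real x powr (-w) * (complex_of_real t powr (w - 1) / of_real (exp t)))"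
      unfolding interval_lebesgue_integral_def einterval_0_inf
      by (simp only: if_True ereal_less_eq(1)) (intro set_lebesgue_integral_cong, auto simp: eqh)
    also have "\<dots> = of_real x powr (-w) * (LINT t:{0<..}|lborel. (complex_of_real t powr (w - 1) / of_real (exp t)))"
      by (rule set_integral_mult_right)
    also have "(LINT t:{0<..}|lborel. (complex_of_real t powr (w - 1) / of_real (exp t))) = Gamma w"
      using set_borel_integral_eq_integral(2)[OF Gamma_lborel[OF w]]
        integral_unique[OF Gamma_integral_complex'[OF w]] by simp
    finally show ?thesis .
  qed
  have nint: "set_integrable lborel (einterval 1 \<infinity>) (\<lambda>u. norm (P (of_real x) w u))"
  proof (rule interval_integral_substitution_nonneg(1)[where g=g and g'=g' and a=0 and b=\<infinity>])
    show "set_integrable lborel (einterval 0 \<infinity>) (\<lambda>t. norm (P (of_real x) w (g t)) * g' t)"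
      using set_integrable_norm[OF hint] g'_nonneg
      by (simp add: norm_scaleR mult.commute)
  qed (use deriv contg' g'_nonneg A B g_gt isCont_P in \<open>auto intro: continuous_intros simp: zero_ereal_def\<close>)
  show int: "set_integrable lborel {1<..} (P (of_real x) w)"
  proof (rule set_integrable_bound[OF nint[unfolded einterval_1_inf]])
    show "set_borel_measurable lborel {1<..} (P (complex_of_real x) w)"
      unfolding set_borel_measurable_def by measurable
  qed auto
  have "(LBINT u=1..\<infinity>. P (of_real x) w u) = (LBINT t=0..\<infinity>. g' t *\<^sub>R P (of_real x) w (g t))"
  proof (rule interval_integral_substitution_integrable[where g=g and g'=g' and a=0 and b=\<infinity>])
  qed (use deriv contg' g'_nonneg A B g_gt isCont_P hint int in \<open>auto simp: zero_ereal_def einterval_1_inf\<close>)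
  then show "(LINT u:{1<..}|lborel. P (of_real x) w u) = Gamma w * of_real x powr (-w)"
    unfolding hval by (simp add: interval_lebesgue_integral_def einterval_1_inf mult.commute)
qed

lemma P_integrable:
  assumes z: "Re z > 0" and w: "Re w > 0"
  shows "set_integrable lborel {1<..} (P z w)"
proof (rule set_integrable_bound[OF P_real_integral(1)[OF z w]])
  show "set_borel_measurable lborel {1<..} (P z w)"
    unfolding set_borel_measurable_def by measurable
  show "AE x in lborel. x \<in> {1<..} \<longrightarrow> norm (P z w x) \<le> norm (P (complex_of_real (Re z)) w x)"
    by (intro AE_I2) (auto simp: norm_P)
qed

lemma restr_bound:
  fixes f :: "real \<Rightarrow> complex" and h :: "real \<Rightarrow> real"
  assumes f: "f integrable_on S" and h: "h integrable_on S"
    and fK: "f integrable_on K" and hK: "h integrable_on K" and KS: "K \<subseteq> S"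
    and le: "\<And>x. x \<in> S \<Longrightarrow> norm (f x) \<le> h x"
  shows "norm (integral S f - integral K f) \<le> integral S h - integral K h"
proof -
  have KS': "K \<inter> S = K" using KS by auto
  have f1: "(\<lambda>x. if x \<in> K then f x else 0) integrable_on S"
    using fK by (simp add: integrable_restrict_Int KS')
  have h1: "(\<lambda>x. if x \<in> K then h x else 0) integrable_on S"
    using hK by (simp add: integrable_restrict_Int KS')
  have f2: "integral S (\<lambda>x. if x \<in> K then f x else 0) = integral K f"
    by (simp add: integral_restrict_Int KS')
  have h2: "integral S (\<lambda>x. if x \<in> K then h x else 0) = integral K h"
    by (simp add: integral_restrict_Int KS')
  have "norm (integral S (\<lambda>x. f x - (if x \<in> K then f x else 0)))
        \<le> integral S (\<lambda>x. h x - (if x \<in> K then h x else 0))"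
    by (rule integral_norm_bound_integral) (use f f1 h h1 le in \<open>auto intro: integrable_diff\<close>)
  then show ?thesis
    using f f1 h h1 by (simp add: integral_diff f2 h2)
qed

lemma P_HK:
  assumes z: "Re z > 0" and w: "Re w > 0"
  shows "P z w integrable_on {1<..}" "(LINT u:{1<..}|lborel. P z w u) = integral {1<..} (P z w)"
  using set_borel_integral_eq_integral[OF P_integrable[OF z w]] by auto

lemma P_contI: "1 < c \<Longrightarrow> continuous_on {c..d} (P z w)"
  by (intro continuous_at_imp_continuous_on ballI isCont_P) auto

lemma hol_I:
  assumes w: "Re w > 0"
  shows "(\<lambda>z. integral {1<..} (P z w)) holomorphic_on {z. Re z > 0}"
proof -
  define U where "U = {z::complex. Re z > 0}"
  have openU: "open U" unfolding U_def by (simp add: open_halfspace_Re_gt)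
  define c where "c k = 1 + 1 / (real k + 1)" for k :: nat
  define d where "d k = real k + 2" for k :: nat
  have c1: "1 < c k" for k unfolding c_def by auto
  have cd: "{c k..d k} \<subseteq> {1<..}" for k using c1[of k] by auto
  define In where "In k z = integral {c k..d k} (P z w)" for k z
  have holIn: "In k holomorphic_on U" for k
  proof -
    have "(\<lambda>z. integral (cbox (c k) (d k)) (P z w)) holomorphic_on U"
    proof (rule leibniz_rule_holomorphic[where fx="\<lambda>z t. - of_real (ln t) * P z w t"])
      fix z t assume "z \<in> U" "t \<in> cbox (c k) (d k)"
      then have t: "t > 1" using c1[of k] by auto
      show "((\<lambda>z. P z w t) has_field_derivative - of_real (ln t) * P z w t) (at z within U)"
      proof -
        have eq: "P z w t = exp ((-z-1) * of_real (ln t)) * of_real (ln t) powr (w-1)" for z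
          using t by (simp add: P_def powr_of_real_pos)
        show ?thesis unfolding eq
          by (auto intro!: derivative_eq_intros)
      qed
    next
      fix z show "P z w integrable_on cbox (c k) (d k)"
        using P_contI[OF c1] by (auto intro: integrable_continuous_interval)
    next
      show "continuous_on (U \<times> cbox (c k) (d k)) (\<lambda>(z, t). - complex_of_real (ln t) * P z w t)"
        unfolding P_def using c1[of k]
        by (auto intro!: continuous_intros simp: case_prod_unfold)
    next
      show "convex U" unfolding U_def by (rule convex_halfspace_Re_gt)
    qed
    then show ?thesis unfolding In_def by simp
  qed
  have "(\<lambda>z. integral {1<..} (P z w)) holomorphic_on ball z0 (Re z0 / 2)" if z0: "Re z0 > 0" for z0
  proof -
    define a where "a = Re z0 / 2"
    have a: "a > 0" using z0 unfolding a_def by auto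
    define H where "H u = norm (P (of_real a) w u)" for u
    have Hset: "set_integrable lborel {1<..} H"
      unfolding H_def using set_integrable_norm[OF P_integrable[of "of_real a" w]] a w by simp
    have HI: "H integrable_on {1<..}" using set_borel_integral_eq_integral(1)[OF Hset] .
    have HK: "H integrable_on {c k..d k}" for k
      unfolding H_def using P_contI[OF c1, of k "d k" "of_real a" w]
      by (auto intro!: integrable_continuous_interval continuous_intros)
    have PK: "P z w integrable_on {c k..d k}" for k z
      using P_contI[OF c1] by (auto intro: integrable_continuous_interval)
    have ReZ: "Re z \<ge> a" if "z \<in> cball z0 a" for z
    proof -
      have "Re (z0 - z) \<le> a" using that abs_Re_le_cmod[of "z0 - z"] by (auto simp: dist_norm)
      then show ?thesis unfolding a_def by simp
    qed
    have bound: "norm (P z w u) \<le> H u" if "z \<in> cball z0 a" "u \<in> {1<..}" for z u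
    proof -
      have "u powr (-Re z - 1) \<le> u powr (-a - 1)"
        using ReZ[OF that(1)] that(2) by (intro powr_mono) auto
      then show ?thesis unfolding H_def using that(2)
        by (auto simp: norm_P intro!: mult_right_mono)
    qed
    define T where "T k = integral {1<..} H - integral {c k..d k} H" for k
    have Tlim: "T \<longlonglongrightarrow> 0"
    proof -
      have "(\<lambda>k. integral {1<..} (\<lambda>u. if u \<in> {c k..d k} then H u else 0)) \<longlonglongrightarrow> integral {1<..} H"
      proof (rule dominated_convergence(2)[where h=H])
        fix k show "(\<lambda>u. if u \<in> {c k..d k} then H u else 0) integrable_on {1<..}"
          using HK[of k] cd[of k] by (subst integrable_restrict_Int) (simp add: Int_absorb2)
      next
        fix k and u :: real assume "u \<in> {1<..}"
        show "norm (if u \<in> {c k..d k} then H u else 0) \<le> H u" unfolding H_def by auto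
      next
        fix u :: real assume u: "u \<in> {1<..}"
        obtain N :: nat where N: "max (1 / (u - 1)) u < real N" using reals_Archimedean2 by blast
        have "eventually (\<lambda>k. (if u \<in> {c k..d k} then H u else 0) = H u) sequentially"
          unfolding eventually_sequentially
        proof (intro exI allI impI)
          fix k assume k: "N \<le> k"
          then have k1: "1 / (u - 1) < real k + 1" "u \<le> real k + 2" using N by auto
          have "1 / (real k + 1) < u - 1" using k1(1) u
            by (simp add: field_simps)
          then have "u \<in> {c k..d k}" using k1 unfolding c_def d_def by auto
          then show "(if u \<in> {c k..d k} then H u else 0) = H u" by simp
        qed
        then show "(\<lambda>k. if u \<in> {c k..d k} then H u else 0) \<longlonglongrightarrow> H u"
          by (rule tendsto_eventually)
      qed (rule HI)
      moreover have "integral {1<..} (\<lambda>u. if u \<in> {c k..d k} then H u else 0) = integral {c k..d k} H" for k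
        using cd[of k] by (subst integral_restrict_Int) (simp add: Int_absorb2)
      ultimately have "(\<lambda>k. integral {c k..d k} H) \<longlonglongrightarrow> integral {1<..} H" by simp
      then have "(\<lambda>k. integral {1<..} H - integral {c k..d k} H) \<longlonglongrightarrow> integral {1<..} H - integral {1<..} H"
        by (intro tendsto_diff tendsto_const)
      then show ?thesis unfolding T_def by simp
    qed
    have ulim: "uniform_limit (cball z0 a) In (\<lambda>z. integral {1<..} (P z w)) sequentially"
      unfolding uniform_limit_iff
    proof (intro allI impI)
      fix e :: real assume e: "e > 0"
      have "eventually (\<lambda>k. T k < e) sequentially" using order_tendstoD(2)[OF Tlim e] .
      then show "\<forall>\<^sub>F k in sequentially. \<forall>z\<in>cball z0 a. dist (In k z) (integral {1<..} (P z w)) < e"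
      proof eventually_elim
        case (elim k)
        show ?case
        proof
          fix z assume z: "z \<in> cball z0 a"
          have "Re z > 0" using ReZ[OF z] a by auto
          then have "norm (integral {1<..} (P z w) - integral {c k..d k} (P z w)) \<le> T k"
            unfolding T_def
            by (intro restr_bound P_HK(1) w HI PK HK cd bound[OF z])
          then show "dist (In k z) (integral {1<..} (P z w)) < e"
            using elim unfolding In_def by (simp add: dist_norm norm_minus_commute)
        qed
      qed
    qed
    have cballU: "cball z0 a \<subseteq> U"
    proof
      fix z assume "z \<in> cball z0 a" then show "z \<in> U" using ReZ a unfolding U_def by force
    qed
    obtain "continuous_on (cball z0 a) (\<lambda>z. integral {1<..} (P z w))"
           "(\<lambda>z. integral {1<..} (P z w)) holomorphic_on ball z0 a"
    proof (rule holomorphic_uniform_limit[OF _ ulim])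
      show "\<forall>\<^sub>F n in sequentially. continuous_on (cball z0 a) (In n) \<and> In n holomorphic_on ball z0 a"
      proof (intro always_eventually allI conjI)
        fix n
        have ballU: "ball z0 a \<subseteq> U" using cballU ball_subset_cball by blast
        show "In n holomorphic_on ball z0 a" by (rule holomorphic_on_subset[OF holIn ballU])
        show "continuous_on (cball z0 a) (In n)"
          by (rule holomorphic_on_imp_continuous_on[OF holomorphic_on_subset[OF holIn cballU]])
      qed
    qed auto
    then show ?thesis unfolding a_def by simp
  qed
  then show ?thesis
    unfolding holomorphic_on_def
  proof (intro ballI)
    fix z0 :: complex assume z0: "z0 \<in> {z. 0 < Re z}"
    have "(\<lambda>z. integral {1<..} (P z w)) field_differentiable at z0"
      by (rule holomorphic_on_imp_differentiable_at[OF \<open>Re z0 > 0 \<Longrightarrow> _\<close>]) (use z0 in auto)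
    then show "(\<lambda>z. integral {1<..} (P z w)) field_differentiable at z0 within {z. 0 < Re z}"
      by (rule field_differentiable_at_within)
  qed
qed

lemma P_integral:
  assumes z: "Re z > 0" and w: "Re w > 0"
  shows "(LINT u:{1<..}|lborel. P z w u) = Gamma w * z powr (-w)"
proof -
  define U where "U = {z::complex. Re z > 0}"
  define f where "f z = integral {1<..} (P z w) - Gamma w * z powr (-w)" for z
  have "f z = 0"
  proof (rule analytic_continuation[where f=f and S=U and U="of_real ` {0<..}" and \<xi>=1])
    show "f holomorphic_on U" unfolding f_def U_def
      by (intro holomorphic_intros hol_I[OF w]) (auto simp: complex_nonpos_Reals_iff)
    show "open U" unfolding U_def by (simp add: open_halfspace_Re_gt)
    show "connected U" unfolding U_def by (rule connected_halfspace_Re_gt)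
    show "of_real ` {0<..} \<subseteq> U" unfolding U_def by auto
    show "1 \<in> U" "z \<in> U" unfolding U_def using z by auto
    show "1 islimpt (complex_of_real ` {0<..})"
      unfolding islimpt_approachable
    proof (intro allI impI)
      fix e :: real assume e: "e > 0"
      show "\<exists>x'\<in>complex_of_real ` {0<..}. x' \<noteq> 1 \<and> dist x' 1 < e"
      proof (rule bexI[of _ "of_real (1 + e/2)"])
        show "complex_of_real (1 + e/2) \<in> complex_of_real ` {0<..}" using e by (intro imageI) auto
      qed (use e in \<open>auto simp: dist_norm\<close>)
    qed
    fix y assume "y \<in> complex_of_real ` {0<..}"
    then obtain x where x: "x > 0" "y = of_real x" by auto
    show "f y = 0"
      using P_real_integral(2)[OF x(1) w] P_HK(2)[of "of_real x" w] x w unfolding f_def by simp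
  qed
  then show ?thesis using P_HK(2)[OF z w] unfolding f_def by simp
qed

lemma deriv_unique_ext:
  fixes F1 F2 :: "complex \<Rightarrow> complex"
  assumes "open D1" "0 \<in> D1" "F1 holomorphic_on D1" "{w. Re w > 0} \<subseteq> D1"
      and "open D2" "0 \<in> D2" "F2 holomorphic_on D2" "{w. Re w > 0} \<subseteq> D2"
      and eq: "\<And>w. Re w > 0 \<Longrightarrow> F1 w = F2 w"
  shows "deriv F1 0 = deriv F2 0"
proof -
  have "open (D1 \<inter> D2)" "0 \<in> D1 \<inter> D2" using assms by auto
  then obtain e where e: "e > 0" "ball 0 e \<subseteq> D1 \<inter> D2"
    using open_contains_ball by blast
  define V where "V = ball 0 e \<union> {w::complex. Re w > 0}"
  have VD: "V \<subseteq> D1 \<inter> D2" unfolding V_def using e assms by auto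
  have "F1 w - F2 w = 0" if "w \<in> ball 0 e" for w
  proof (rule analytic_continuation[where f="\<lambda>w. F1 w - F2 w" and S=V and U="{w. Re w > 0}" and \<xi>=1])
    show "(\<lambda>w. F1 w - F2 w) holomorphic_on V"
      using VD assms by (intro holomorphic_intros) (auto intro: holomorphic_on_subset)
    show "open V" unfolding V_def by (auto intro!: open_Un open_halfspace_Re_gt)
    show "connected V" unfolding V_def
    proof (rule connected_Un)
      show "ball 0 e \<inter> {w. 0 < Re w} \<noteq> {}"
        using e by (intro ex_in_conv[THEN iffD1] exI[of _ "of_real (e/2)"]) auto
    qed (auto intro: connected_halfspace_Re_gt)
    show "{w. Re w > 0} \<subseteq> V" "1 \<in> V" "w \<in> V" unfolding V_def using that by auto
    show "1 islimpt {w::complex. Re w > 0}"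
      unfolding islimpt_approachable
    proof (intro allI impI)
      fix e :: real assume e: "e > 0"
      show "\<exists>x'\<in>{w::complex. Re w > 0}. x' \<noteq> 1 \<and> dist x' 1 < e"
        by (rule bexI[of _ "of_real (1 + e/2)"]) (use e in \<open>auto simp: dist_norm\<close>)
    qed
  qed (use eq in auto)
  then have "eventually (\<lambda>w. F1 w = F2 w) (nhds 0)"
    unfolding eventually_nhds using e by (intro exI[of _ "ball 0 e"]) auto
  then show ?thesis by (rule deriv_cong_ev) simp
qed

lemma exp_int_Ln: "x \<noteq> 0 \<Longrightarrow> exp (of_int n * Ln x) = x powi n"
proof (cases "n \<ge> 0")
  case True
  then obtain m where "n = int m" by (metis nonneg_int_cases)
  then show "x \<noteq> 0 \<Longrightarrow> ?thesis" by (simp add: exp_of_nat_mult)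
next
  case False
  then obtain m where "n = - int m" by (metis nonpos_int_cases linear)
  then show "x \<noteq> 0 \<Longrightarrow> ?thesis"
    by (simp add: exp_minus exp_of_nat_mult power_int_minus)
qed

lemma prod_powi: "finite A \<Longrightarrow> (\<Prod>k\<in>A. f k) powi n = (\<Prod>k\<in>A. (f k :: complex) powi n)"
  by (induction A rule: finite_induct) (auto simp: power_int_mult_distrib)

lemma mp_mult: "map_poly (of_int :: int \<Rightarrow> 'a::comm_ring_1) (p * q) = map_poly of_int p * map_poly of_int q"
  by (rule poly_eqI) (simp add: coeff_map_poly coeff_mult)

lemma mp_diff: "map_poly (of_int :: int \<Rightarrow> 'a::comm_ring_1) (p - q) = map_poly of_int p - map_poly of_int q"
  by (rule poly_eqI) (simp add: coeff_map_poly)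

lemma mp_prod: "map_poly (of_int :: int \<Rightarrow> 'a::comm_ring_1) (\<Prod>k\<in>A. f k) = (\<Prod>k\<in>A. map_poly of_int (f k))"
  by (induction A rule: infinite_finite_induct) (auto simp: mp_mult)

lemma N_GL_eval: "poly (map_poly (of_int :: int \<Rightarrow> 'a::comm_ring_1) (N_GL r)) x =
   x ^ (r * (r - 1) div 2) * (\<Prod>k\<in>{1..r}. x ^ k - 1)"
  unfolding N_GL_def mp_mult mp_prod mp_diff
  by (simp add: map_poly_monom poly_prod poly_monom)

lemma N_GL_sum: "(\<Sum>i\<le>degree (N_GL r). of_int (coeff (N_GL r) i) * (x :: 'a::{comm_ring_1,ring_char_0}) ^ i) =
   x ^ (r * (r - 1) div 2) * (\<Prod>k\<in>{1..r}. x ^ k - 1)"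
proof -
  have "degree (map_poly (of_int :: int \<Rightarrow> 'a) (N_GL r)) = degree (N_GL r)"
    by (rule degree_map_poly) auto
  then show ?thesis
    using N_GL_eval[of r x] unfolding poly_altdef by (simp add: coeff_map_poly)
qed

lemma even_rr1: fixes r :: nat shows "even (r * (r - 1))"
  by (cases "even r") auto

lemma tri_sum: fixes r :: nat shows "(\<Sum>k\<in>{1..r}. k) + r * (r - 1) div 2 = r ^ 2"
proof -
  have "2 * (\<Sum>k\<in>{1..r}. k) = r * (r + 1)"
    using gauss_sum_from_Suc_0[of r, where ?'a = nat] by (simp add: even_rr1)
  moreover have "2 * (r * (r - 1) div 2) = r * (r - 1)" using even_rr1[of r] by simp
  ultimately have "2 * ((\<Sum>k\<in>{1..r}. k) + r * (r - 1) div 2) = 2 * r ^ 2"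
    by (cases r) (simp_all add: algebra_simps power2_eq_square)
  then show ?thesis by simp
qed

lemma degree_factor: "k \<ge> 1 \<Longrightarrow> degree (monom (1::int) k - 1) = k"
  by (subst diff_conv_add_uminus, subst degree_add_eq_left) (auto simp: degree_monom_eq)

lemma factor_nz: "k \<ge> 1 \<Longrightarrow> monom (1::int) k - 1 \<noteq> 0"
proof
  assume "k \<ge> 1" "monom (1::int) k - 1 = 0"
  then have "degree (monom (1::int) k - 1) = 0" by simp
  with degree_factor[OF \<open>k \<ge> 1\<close>] \<open>k \<ge> 1\<close> show False by simp
qed

lemma degree_N_GL: "degree (N_GL r) = r ^ 2"
proof -
  have "degree (\<Prod>k\<in>{1..r}. monom (1::int) k - 1) = (\<Sum>k\<in>{1..r}. k)"
  proof -
    have fz: "\<And>k. k \<in> {1..r} \<Longrightarrow> monom (1::int) k - 1 \<noteq> 0" by (rule factor_nz) auto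
    show ?thesis by (subst degree_prod_sum_eq[OF fz]) (auto intro!: sum.cong simp: degree_factor)
  qed
  moreover have "(\<Prod>k\<in>{1..r}. monom (1::int) k - 1) \<noteq> 0"
  proof -
    have "\<forall>k\<in>{1..r}. monom (1::int) k - 1 \<noteq> 0" by (intro ballI factor_nz) auto
    then show ?thesis by (simp only: prod_zero_iff finite_atLeastAtMost) blast
  qed
  ultimately show ?thesis unfolding N_GL_def
    by (subst degree_mult_eq) (use tri_sum[of r] in \<open>auto simp: degree_monom_eq add.commute\<close>)
qed

lemma reflect_monom1: "reflect_poly (monom (1::int) m) = 1"
  by (rule poly_eqI) (auto simp: coeff_reflect_poly degree_monom_eq coeff_monom coeff_1)

lemma reflect_factor: "k \<ge> 1 \<Longrightarrow> reflect_poly (monom (1::int) k - 1) = - (monom 1 k - 1)"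
  by (rule poly_eqI) (auto simp: coeff_reflect_poly degree_factor coeff_monom coeff_1)

lemma neg1_pow_poly: "((-1)::int poly) ^ r = [:(-1) ^ r:]"
  by (induction r) auto

lemma reflect_N_GL: "reflect_poly (N_GL r) = (-1) ^ r * (\<Prod>k\<in>{1..r}. monom (1::int) k - 1)"
proof -
  have "reflect_poly (\<Prod>k\<in>{1..r}. monom (1::int) k - 1) = (\<Prod>k\<in>{1..r}. (-1) * (monom (1::int) k - 1))"
    unfolding reflect_poly_prod by (intro prod.cong refl) (simp add: reflect_factor)
  also have "\<dots> = (-1) ^ r * (\<Prod>k\<in>{1..r}. monom (1::int) k - 1)"
    by (subst prod.distrib) simp
  finally show ?thesis unfolding N_GL_def reflect_poly_mult reflect_monom1 by simp
qed

lemma N_GL_symm: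
  fixes r j :: nat
  defines "m \<equiv> r * (r - 1) div 2"
  assumes j: "j \<le> r ^ 2 + m"
  shows "coeff (N_GL r) (r ^ 2 + m - j) = (-1) ^ r * coeff (N_GL r) j"
proof -
  define Q where "Q = (\<Prod>k\<in>{1..r}. monom (1::int) k - 1)"
  have NQ: "N_GL r = monom 1 m * Q" unfolding N_GL_def Q_def m_def ..
  have cN: "coeff (N_GL r) k = (if k < m then 0 else coeff Q (k - m))" for k
    unfolding NQ coeff_monom_mult by simp
  have refl: "coeff (N_GL r) (r ^ 2 - n) = (-1) ^ r * coeff Q n" if "n \<le> r ^ 2" for n
  proof -
    have "coeff (reflect_poly (N_GL r)) n = coeff (N_GL r) (r ^ 2 - n)"
      using that by (simp add: coeff_reflect_poly degree_N_GL)
    then show ?thesis unfolding reflect_N_GL Q_def[symmetric] neg1_pow_poly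
      by simp
  qed
  show ?thesis
  proof (cases "j < m")
    case True
    have "coeff (N_GL r) (r ^ 2 + m - j) = 0"
      using True by (intro coeff_eq_0) (simp add: degree_N_GL)
    then show ?thesis using True cN[of j] by simp
  next
    case False
    then have "r ^ 2 + m - j = r ^ 2 - (j - m)" "j - m \<le> r ^ 2" using j by auto
    then show ?thesis using refl[of "j - m"] cN[of j] False by simp
  qed
qed

lemma Z_monomials:
  fixes N :: "real \<Rightarrow> complex" and A :: "nat set" and c :: "nat \<Rightarrow> int" and e :: "nat \<Rightarrow> real"
  assumes A: "finite A" and N: "\<And>u. u > 1 \<Longrightarrow> N u = (\<Sum>k\<in>A. of_int (c k) * of_real (u powr e k))"
    and s: "\<And>k. k \<in> A \<Longrightarrow> Re s > e k"
  shows "has_Z_extension N s" "zeta_N N s = (\<Prod>k\<in>A. (s - of_real (e k)) powi (- c k))"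
proof -
  define b where "b k = s - of_real (e k)" for k
  have bRe: "k \<in> A \<Longrightarrow> Re (b k) > 0" for k using s unfolding b_def by auto
  have bnz: "k \<in> A \<Longrightarrow> b k \<noteq> 0" for k using bRe by fastforce
  define F where "F w = (\<Sum>k\<in>A. of_int (c k) * b k powr (-w))" for w
  have Zi: "Z_integrand N w s u = (\<Sum>k\<in>A. of_int (c k) * P (b k) w u)" if u: "u > 1" for w u
  proof -
    have key: "of_real (u powr e k) / of_real u powr (s + 1) = of_real u powr (- b k - 1)" for k
    proof -
      have "complex_of_real (u powr e k) = exp (of_real (e k) * of_real (ln u))"
        using u by (simp add: powr_def) (metis exp_of_real of_real_mult)
      then show ?thesis using u
        by (simp add: powr_of_real_pos exp_diff[symmetric] b_def algebra_simps)
    qed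
    show ?thesis
      unfolding Z_integrand_def N[OF u] P_def sum_divide_distrib sum_distrib_right
      by (intro sum.cong refl) (simp add: key[symmetric])
  qed
  have term_int: "set_integrable lborel {1<..} (\<lambda>u. of_int (c k) * P (b k) w u)"
    if k: "k \<in> A" and w: "Re w > 0" for k w
    by (rule set_integrable_mult_right) (rule P_integrable[OF bRe[OF k] w])
  have int_sum: "set_integrable lborel {1<..} (\<lambda>u. \<Sum>k\<in>A. of_int (c k) * P (b k) w u)"
    if w: "Re w > 0" for w
    unfolding set_integrable_def scaleR_sum_right
    by (intro Bochner_Integration.integrable_sum) (rule term_int[OF _ w, unfolded set_integrable_def])
  have conv: "Z_convergent N w s" if w: "Re w > 0" for w
    unfolding Z_convergent_def using int_sum[OF w]
    by (subst set_integrable_cong[OF refl refl Zi]) auto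
  have ZN: "Z_N N w s = F w" if w: "Re w > 0" for w
  proof -
    have "(LINT u:{1<..}|lborel. Z_integrand N w s u) = (LINT u:{1<..}|lborel. (\<Sum>k\<in>A. of_int (c k) * P (b k) w u))"
      by (intro set_lebesgue_integral_cong) (auto simp: Zi)
    also have "\<dots> = (\<Sum>k\<in>A. (LINT u:{1<..}|lborel. of_int (c k) * P (b k) w u))"
      unfolding set_lebesgue_integral_def scaleR_sum_right
      by (subst Bochner_Integration.integral_sum)
         (auto intro: term_int[OF _ w, unfolded set_integrable_def])
    also have "\<dots> = (\<Sum>k\<in>A. of_int (c k) * (LINT u:{1<..}|lborel. P (b k) w u))"
      by (simp only: set_integral_mult_right)
    also have "\<dots> = (\<Sum>k\<in>A. of_int (c k) * (Gamma w * b k powr (-w)))"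
      by (intro sum.cong refl) (simp add: P_integral[OF bRe w])
    finally have "(LINT u:{1<..}|lborel. Z_integrand N w s u) = Gamma w * F w"
      unfolding F_def by (simp add: sum_distrib_left algebra_simps)
    moreover have "Gamma w \<noteq> 0"
      using w by (intro Gamma_nonzero) (auto elim!: nonpos_Ints_cases)
    ultimately show ?thesis unfolding Z_N_def by simp
  qed
  have holF: "F holomorphic_on UNIV"
    unfolding F_def using bnz by (auto intro!: holomorphic_intros)
  have ext: "Z_extension N s F UNIV"
    unfolding Z_extension_def using holF conv ZN by auto
  then show "has_Z_extension N s" unfolding has_Z_extension_def by blast
  define G where "G = (SOME F. \<exists>D. Z_extension N s F D)"
  have "\<exists>D. Z_extension N s G D" unfolding G_def using someI_ex[of "\<lambda>F. \<exists>D. Z_extension N s F D"] ext by blast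
  then obtain D where D: "Z_extension N s G D" by blast
  have "deriv G 0 = deriv F 0"
    by (rule deriv_unique_ext) (use D ext in \<open>auto simp: Z_extension_def\<close>)
  also have "deriv F 0 = (\<Sum>k\<in>A. of_int (c k) * (- Ln (b k)))"
  proof (rule DERIV_imp_deriv)
    show "(F has_field_derivative (\<Sum>k\<in>A. of_int (c k) * (- Ln (b k)))) (at 0)"
    proof -
      have Feq: "F = (\<lambda>w. \<Sum>k\<in>A. of_int (c k) * exp (-w * Ln (b k)))"
        unfolding F_def using bnz by (auto simp: powr_def intro!: sum.cong)
      show ?thesis unfolding Feq
        by (auto intro!: derivative_eq_intros sum.cong)
    qed
  qed
  finally have "zeta_N N s = exp (\<Sum>k\<in>A. of_int (c k) * (- Ln (b k)))"
    unfolding zeta_N_def G_def by simp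
  also have "\<dots> = (\<Prod>k\<in>A. exp (of_int (- c k) * Ln (b k)))"
    using A by (simp add: exp_sum)
  also have "\<dots> = (\<Prod>k\<in>A. b k powi (- c k))"
    by (intro prod.cong refl exp_int_Ln bnz)
  finally show "zeta_N N s = (\<Prod>k\<in>A. (s - of_real (e k)) powi (- c k))" unfolding b_def .
qed

lemma sum_coeff_zero:
  assumes "r \<ge> 1"
  shows "(\<Sum>i\<le>degree (N_GL r). coeff (N_GL r) i) = 0"
proof -
  have "(\<Sum>i\<le>degree (N_GL r). of_int (coeff (N_GL r) i) * (1::int) ^ i) =
     1 ^ (r * (r - 1) div 2) * (\<Prod>k\<in>{1..r}. 1 ^ k - 1)"
    by (rule N_GL_sum)
  also have "\<dots> = 0" using assms by simp
  finally show ?thesis by simp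
qed

lemma prod_powi_sum:
  fixes x :: complex
  assumes "x \<noteq> 0"
  shows "(\<Prod>j\<in>A. x powi e j) = x powi (\<Sum>j\<in>A. e j)"
  by (induction A rule: infinite_finite_induct) (auto simp: power_int_add assms)

lemma zeta_GL_ext:
  assumes "r ^ 2 \<le> D"
  shows "zeta_GL r z = (\<Prod>k\<in>{0..D}. (z - of_nat k) powi (- coeff (N_GL r) k))"
  unfolding zeta_GL_def degree_N_GL
proof (rule prod.mono_neutral_left)
  show "\<forall>i\<in>{0..D} - {0..r\<^sup>2}. (z - of_nat i) powi - coeff (N_GL r) i = 1"
    by (auto simp: coeff_eq_0 degree_N_GL)
qed (use assms in auto)

lemma D_eq: fixes r :: nat shows "r * (3 * r - 1) div 2 = r ^ 2 + r * (r - 1) div 2"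
proof -
  have "r * (3 * r - 1) = 2 * r ^ 2 + r * (r - 1)"
    by (cases r) (simp_all add: algebra_simps power2_eq_square)
  moreover have "r * (r - 1) = 2 * (r * (r - 1) div 2)" using even_rr1[of r] by simp
  ultimately have "r * (3 * r - 1) = 2 * (r ^ 2 + r * (r - 1) div 2)" by simp
  then show ?thesis by simp
qed

lemma part_c:
  assumes r: "r \<ge> 1"
  shows "zeta_GL r (of_nat (r * (3 * r - 1) div 2) - s) = zeta_GL r s powi ((-1) ^ r)"
proof -
  define m where "m = r * (r - 1) div 2"
  define D where "D = r ^ 2 + m"
  define a where "a = coeff (N_GL r)"
  have rD: "r ^ 2 \<le> D" unfolding D_def by simp
  have symm: "a (D - j) = (-1) ^ r * a j" if "j \<le> D" for j
    using N_GL_symm[of j r] that unfolding a_def D_def m_def by simp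
  have "zeta_GL r (of_nat D - s) = (\<Prod>k\<in>{0..D}. (of_nat D - s - of_nat k) powi (- a k))"
    unfolding a_def by (rule zeta_GL_ext[OF rD])
  also have "\<dots> = (\<Prod>j\<in>{0..D}. (of_nat D - s - of_nat (D - j)) powi (- a (D - j)))"
    by (subst prod.atLeastAtMost_rev) simp
  also have "\<dots> = (\<Prod>j\<in>{0..D}. ((-1) * (s - of_nat j)) powi (- ((-1) ^ r * a j)))"
    by (intro prod.cong refl) (auto simp: symm of_nat_diff)
  also have "\<dots> = (\<Prod>j\<in>{0..D}. (-1) powi (- ((-1) ^ r * a j))) *
                  (\<Prod>j\<in>{0..D}. (s - of_nat j) powi (- ((-1) ^ r * a j)))"
    by (simp only: power_int_mult_distrib prod.distrib)
  also have "(\<Prod>j\<in>{0..D}. (-1::complex) powi (- ((-1) ^ r * a j))) = 1"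
  proof -
    have "(\<Sum>j\<in>{0..D}. a j) = (\<Sum>j\<in>{0..r^2}. a j)"
      by (rule sum.mono_neutral_right) (auto simp: rD a_def coeff_eq_0 degree_N_GL)
    also have "\<dots> = 0" using sum_coeff_zero[OF r] unfolding a_def degree_N_GL
      by (simp add: atLeast0AtMost)
    finally have "(\<Sum>j\<in>{0..D}. - ((-1) ^ r * a j)) = 0"
      by (simp add: sum_negf sum_distrib_left[symmetric])
    then show ?thesis by (subst prod_powi_sum) auto
  qed
  also have "(\<Prod>j\<in>{0..D}. (s - of_nat j) powi (- ((-1) ^ r * a j))) =
             (\<Prod>j\<in>{0..D}. (s - of_nat j) powi (- a j)) powi ((-1) ^ r)"
    by (subst prod_powi) (auto simp: power_int_mult[symmetric] mult.commute intro!: prod.cong)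
  also have "(\<Prod>j\<in>{0..D}. (s - of_nat j) powi (- a j)) = zeta_GL r s"
    unfolding a_def by (rule zeta_GL_ext[OF rD, symmetric])
  finally show ?thesis unfolding D_def m_def D_eq by simp
qed

lemma real_a:
  fixes u :: real assumes u: "u > 0"
  shows "(\<Prod>k\<in>{1..r}. 1 - 1 / u ^ k) =
         (\<Sum>i\<in>{0..r^2}. real_of_int (coeff (N_GL r) i) * u powr (real i - real (r^2)))"
proof -
  define m where "m = r * (r - 1) div 2"
  have "(\<Prod>k\<in>{1..r}. 1 - 1 / u ^ k) = (\<Prod>k\<in>{1..r}. (u ^ k - 1) / u ^ k)"
    using u by (intro prod.cong refl) (simp add: field_simps)
  also have "\<dots> = (\<Prod>k\<in>{1..r}. u ^ k - 1) / u ^ (\<Sum>k\<in>{1..r}. k)"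
    by (simp add: prod_dividef power_sum)
  also have "\<dots> = (u ^ m * (\<Prod>k\<in>{1..r}. u ^ k - 1)) / u ^ (r ^ 2)"
  proof -
    have e: "u ^ (r ^ 2) = u ^ m * u ^ (\<Sum>k\<in>{1..r}. k)"
      unfolding m_def by (subst tri_sum[of r, symmetric]) (simp add: power_add)
    show ?thesis using u by (simp add: e)
  qed
  also have "u ^ m * (\<Prod>k\<in>{1..r}. u ^ k - 1) = (\<Sum>i\<in>{0..r^2}. real_of_int (coeff (N_GL r) i) * u ^ i)"
    using N_GL_sum[of r u] unfolding m_def degree_N_GL by (simp add: atLeast0AtMost)
  also have "(\<Sum>i\<in>{0..r^2}. real_of_int (coeff (N_GL r) i) * u ^ i) / u ^ (r ^ 2) =
      (\<Sum>i\<in>{0..r^2}. real_of_int (coeff (N_GL r) i) * u powr (real i - real (r^2)))"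
    unfolding sum_divide_distrib using u
  proof (intro sum.cong refl)
    fix i assume "i \<in> {0..r^2}"
    have pr: "u powr (real r)^2 = u^(r^2)" using powr_realpow[OF u, of "r^2"] by simp
    show "real_of_int (coeff (N_GL r) i) * u ^ i / u ^ r\<^sup>2 =
          real_of_int (coeff (N_GL r) i) * u powr (real i - real (r\<^sup>2))"
      using u by (simp add: powr_diff powr_realpow pr)
  qed
  finally show ?thesis .
qed

lemma real_b:
  fixes u :: real assumes u: "u > 0"
  shows "(\<Prod>k\<in>{1..r}. 1 - 1 / (1 / u) ^ k) =
         (\<Sum>i\<in>{0..r^2}. real_of_int ((-1) ^ r * coeff (N_GL r) i) * u powr (real i - real (r * (r - 1) div 2)))"
proof -
  define m where "m = r * (r - 1) div 2"
  have "(\<Prod>k\<in>{1..r}. 1 - 1 / (1 / u) ^ k) = (\<Prod>k\<in>{1..r}. (-1) * (u ^ k - 1))"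
    using u by (intro prod.cong refl) (simp add: power_one_over)
  also have "\<dots> = (-1) ^ r * (\<Prod>k\<in>{1..r}. u ^ k - 1)"
    by (subst prod.distrib) simp
  also have "\<dots> = (-1) ^ r * (u ^ m * (\<Prod>k\<in>{1..r}. u ^ k - 1)) / u ^ m"
    using u by simp
  also have "u ^ m * (\<Prod>k\<in>{1..r}. u ^ k - 1) = (\<Sum>i\<in>{0..r^2}. real_of_int (coeff (N_GL r) i) * u ^ i)"
    using N_GL_sum[of r u] unfolding m_def degree_N_GL by (simp add: atLeast0AtMost)
  also have "(-1) ^ r * (\<Sum>i\<in>{0..r^2}. real_of_int (coeff (N_GL r) i) * u ^ i) / u ^ m =
      (\<Sum>i\<in>{0..r^2}. real_of_int ((-1) ^ r * coeff (N_GL r) i) * u powr (real i - real m))"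
    unfolding sum_divide_distrib sum_distrib_left using u
    by (intro sum.cong refl) (simp add: powr_diff powr_realpow)
  finally show ?thesis unfolding m_def .
qed

theorem proposition3p9:
  fixes r :: nat
  assumes "r \<ge> 1"
  shows "(\<exists>\<sigma>::real. \<forall>s::complex. Re s > \<sigma> \<longrightarrow>
            has_Z_extension (\<lambda>u. complex_of_real (\<Prod>k\<in>{1..r}. 1 - 1 / u ^ k)) s \<and>
            zeta_N (\<lambda>u. complex_of_real (\<Prod>k\<in>{1..r}. 1 - 1 / u ^ k)) s
              = zeta_GL r (s + of_nat (r ^ 2)))
       \<and> (\<exists>\<sigma>::real. \<forall>s::complex. Re s > \<sigma> \<longrightarrow>
            has_Z_extension (\<lambda>u. complex_of_real (\<Prod>k\<in>{1..r}. 1 - 1 / (1 / u) ^ k)) s \<and>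
            zeta_N (\<lambda>u. complex_of_real (\<Prod>k\<in>{1..r}. 1 - 1 / (1 / u) ^ k)) s
              = zeta_GL r (s + of_nat (r * (r - 1) div 2)) powi ((-1) ^ r))
       \<and> (\<forall>s::complex. s \<notin> \<int> \<longrightarrow>
            zeta_GL r (of_nat (r * (3 * r - 1) div 2) - s) = zeta_GL r s powi ((-1) ^ r))"
proof (intro conjI)
  let ?a = "coeff (N_GL r)"
  show "\<exists>\<sigma>::real. \<forall>s::complex. Re s > \<sigma> \<longrightarrow>
            has_Z_extension (\<lambda>u. complex_of_real (\<Prod>k\<in>{1..r}. 1 - 1 / u ^ k)) s \<and>
            zeta_N (\<lambda>u. complex_of_real (\<Prod>k\<in>{1..r}. 1 - 1 / u ^ k)) s
              = zeta_GL r (s + of_nat (r ^ 2))"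
  proof (intro exI[of _ 0] allI impI)
    fix s :: complex assume s: "Re s > 0"
    let ?N = "\<lambda>u. complex_of_real (\<Prod>k\<in>{1..r}. 1 - 1 / u ^ k)"
    have N: "?N u = (\<Sum>k\<in>{0..r^2}. of_int (?a k) * of_real (u powr (real k - real (r^2))))"
      if "u > 1" for u
      using real_a[of u r] that by simp
    have se: "Re s > real k - real (r^2)" if "k \<in> {0..r^2}" for k
    proof -
      have "k \<le> r^2" using that by auto
      then have "real k \<le> real r ^ 2" by (metis of_nat_le_iff of_nat_power)
      then show ?thesis using s unfolding of_nat_power by linarith
    qed
    note Z = Z_monomials[of "{0..r^2}" ?N ?a "\<lambda>k. real k - real (r^2)" s, OF _ N se]
    show "has_Z_extension ?N s \<and> zeta_N ?N s = zeta_GL r (s + of_nat (r ^ 2))"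
    proof
      show "has_Z_extension ?N s" using Z(1) by simp
      have "zeta_N ?N s = (\<Prod>k\<in>{0..r^2}. (s - of_real (real k - real (r^2))) powi (- ?a k))"
        using Z(2) by simp
      also have "\<dots> = zeta_GL r (s + of_nat (r ^ 2))"
        unfolding zeta_GL_def degree_N_GL by (intro prod.cong refl) (simp add: algebra_simps)
      finally show "zeta_N ?N s = zeta_GL r (s + of_nat (r ^ 2))" .
    qed
  qed
  show "\<exists>\<sigma>::real. \<forall>s::complex. Re s > \<sigma> \<longrightarrow>
            has_Z_extension (\<lambda>u. complex_of_real (\<Prod>k\<in>{1..r}. 1 - 1 / (1 / u) ^ k)) s \<and>
            zeta_N (\<lambda>u. complex_of_real (\<Prod>k\<in>{1..r}. 1 - 1 / (1 / u) ^ k)) s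
              = zeta_GL r (s + of_nat (r * (r - 1) div 2)) powi ((-1) ^ r)"
  proof (intro exI[of _ "real (r^2)"] allI impI)
    fix s :: complex assume s: "Re s > real (r^2)"
    let ?N = "\<lambda>u. complex_of_real (\<Prod>k\<in>{1..r}. 1 - 1 / (1 / u) ^ k)"
    let ?m = "r * (r - 1) div 2"
    have N: "?N u = (\<Sum>k\<in>{0..r^2}. of_int ((-1) ^ r * ?a k) * of_real (u powr (real k - real ?m)))"
      if "u > 1" for u
      using real_b[of u r] that by simp
    have se: "Re s > real k - real ?m" if "k \<in> {0..r^2}" for k
    proof -
      have "k \<le> r^2" using that by auto
      then have "real k \<le> real r ^ 2" by (metis of_nat_le_iff of_nat_power)
      moreover have "real ?m \<ge> 0" by simp
      ultimately show ?thesis using s unfolding of_nat_power by linarith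
    qed
    note Z = Z_monomials[of "{0..r^2}" ?N "\<lambda>k. (-1) ^ r * ?a k" "\<lambda>k. real k - real ?m" s, OF _ N se]
    show "has_Z_extension ?N s \<and> zeta_N ?N s = zeta_GL r (s + of_nat ?m) powi ((-1) ^ r)"
    proof
      show "has_Z_extension ?N s" using Z(1) by simp
      have "zeta_N ?N s = (\<Prod>k\<in>{0..r^2}. (s - of_real (real k - real ?m)) powi (- ((-1) ^ r * ?a k)))"
        using Z(2) by simp
      also have "\<dots> = (\<Prod>k\<in>{0..r^2}. (s + of_nat ?m - of_nat k) powi (- ?a k)) powi ((-1) ^ r)"
        by (subst prod_powi) (auto simp: power_int_mult[symmetric] algebra_simps intro!: prod.cong)
      also have "\<dots> = zeta_GL r (s + of_nat ?m) powi ((-1) ^ r)"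
        unfolding zeta_GL_def degree_N_GL ..
      finally show "zeta_N ?N s = zeta_GL r (s + of_nat ?m) powi ((-1) ^ r)" .
    qed
  qed
  show "\<forall>s::complex. s \<notin> \<int> \<longrightarrow>
            zeta_GL r (of_nat (r * (3 * r - 1) div 2) - s) = zeta_GL r s powi ((-1) ^ r)"
    using part_c[OF assms] by blast
qed

end
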